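(* Let $k,a,b$ be positive real numbers and $\{S^{(a,b)}_{k,n}\}_{n\ge0}$ the $k$-FL sequence. For any integers $m\ge n\ge0$, $S^{(a,b)}_{k,m}S^{(a,b)}_{k,n+1}-S^{(a,b)}_{k,m+1}S^{(a,b)}_{k,n}=(-1)^n\{a^2-(k^2+4)b^2\}F_{k,m-n}$.
   Context: The $k$-FL sequence (for positive reals $k,a,b$) is $S^{(a,b)}_{k,0}=2b$, $S^{(a,b)}_{k,1}=bk+a$, $S^{(a,b)}_{k,n}=kS^{(a,b)}_{k,n-1}+S^{(a,b)}_{k,n-2}$. $F_{k,n}$ is the $k$-Fibonacci sequence: $F_{k,0}=0$, $F_{k,1}=1$, $F_{k,n}=kF_{k,n-1}+F_{k,n-2}$. *)

theory Defs
  imports Complex_Main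
begin

fun kfib :: "real \<Rightarrow> nat \<Rightarrow> real" where
  "kfib k 0 = 0"
| "kfib k (Suc 0) = 1"
| "kfib k (Suc (Suc n)) = k * kfib k (Suc n) + kfib k n"

fun kFL :: "real \<Rightarrow> real \<Rightarrow> real \<Rightarrow> nat \<Rightarrow> real" where
  "kFL k a b 0 = 2 * b"
| "kFL k a b (Suc 0) = b * k + a"
| "kFL k a b (Suc (Suc n)) = k * kFL k a b (Suc n) + kFL k a b n"

end

theory Submission
  imports Defs
begin

lemma cass:
  "kFL k a b (Suc n) ^ 2 - kFL k a b (Suc (Suc n)) * kFL k a b n
     = (-1) ^ n * (a\<^sup>2 - (k\<^sup>2 + 4) * b\<^sup>2)"
proof (induction n)
  case 0
  then show ?case by (simp add: power2_eq_square algebra_simps)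
next
  case (Suc n)
  have "kFL k a b (Suc (Suc n)) ^ 2 - kFL k a b (Suc (Suc (Suc n))) * kFL k a b (Suc n)
      = - (kFL k a b (Suc n) ^ 2 - kFL k a b (Suc (Suc n)) * kFL k a b n)"
    by (simp add: power2_eq_square algebra_simps)
  then show ?case using Suc by simp
qed

lemma gen:
  "(kFL k a b (n + d) * kFL k a b (n + 1) - kFL k a b (n + d + 1) * kFL k a b n
     = (-1) ^ n * (a\<^sup>2 - (k\<^sup>2 + 4) * b\<^sup>2) * kfib k d) \<and>
   (kFL k a b (n + Suc d) * kFL k a b (n + 1) - kFL k a b (n + Suc d + 1) * kFL k a b n
     = (-1) ^ n * (a\<^sup>2 - (k\<^sup>2 + 4) * b\<^sup>2) * kfib k (Suc d))"
proof (induction d)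
  case 0
  show ?case using cass[of k a b n] by (simp add: power2_eq_square)
next
  case (Suc d)
  then have h1: "kFL k a b (n + d) * kFL k a b (n + 1) - kFL k a b (n + d + 1) * kFL k a b n
     = (-1) ^ n * (a\<^sup>2 - (k\<^sup>2 + 4) * b\<^sup>2) * kfib k d"
   and h2: "kFL k a b (n + Suc d) * kFL k a b (n + 1) - kFL k a b (n + Suc d + 1) * kFL k a b n
     = (-1) ^ n * (a\<^sup>2 - (k\<^sup>2 + 4) * b\<^sup>2) * kfib k (Suc d)" by auto
  have e1: "kFL k a b (n + Suc (Suc d)) = k * kFL k a b (n + Suc d) + kFL k a b (n + d)"
    by (metis kFL.simps(3) add_Suc_right)
  have e2: "kFL k a b (n + Suc (Suc d) + 1) = k * kFL k a b (n + Suc d + 1) + kFL k a b (n + d + 1)"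
    by (metis kFL.simps(3) add_Suc_right Suc_eq_plus1)
  have "kFL k a b (n + Suc (Suc d)) * kFL k a b (n + 1) - kFL k a b (n + Suc (Suc d) + 1) * kFL k a b n
    = k * (kFL k a b (n + Suc d) * kFL k a b (n + 1) - kFL k a b (n + Suc d + 1) * kFL k a b n)
      + (kFL k a b (n + d) * kFL k a b (n + 1) - kFL k a b (n + d + 1) * kFL k a b n)"
    unfolding e1 e2 by (simp add: algebra_simps)
  also have "\<dots> = (-1) ^ n * (a\<^sup>2 - (k\<^sup>2 + 4) * b\<^sup>2) * kfib k (Suc (Suc d))"
    unfolding h1 h2 by (simp add: algebra_simps)
  finally show ?case using h2 by simp
qed

theorem theorem4p21:
  fixes k a b :: real and m n :: nat
  assumes "k > 0" and "a > 0" and "b > 0" and "m \<ge> n"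
  shows "kFL k a b m * kFL k a b (n + 1) - kFL k a b (m + 1) * kFL k a b n
           = (-1) ^ n * (a\<^sup>2 - (k\<^sup>2 + 4) * b\<^sup>2) * kfib k (m - n)"
proof -
  obtain d where "m = n + d" using assms(4) le_Suc_ex by blast
  then show ?thesis using gen[of k a b n d] by simp
qed

end
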